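(* Let $a,c,p\in\mathbb{C}$ with $-c\notin\mathbb{N}\cup\{0\}$ and $c\neq2$. Write $\sinh(pz)M(a,c;z)=\sum_{n=0}^\infty u_nz^n$, $z\in\mathbb{C}$. Then $u_0=0$, $u_1=p$, $u_2=\frac{ap}{c}$, $u_3=\frac{a(a+1)p}{2c(c+1)}+\frac{p^3}{6}$, $u_4=\frac{ap^3}{6c}+\frac{a(a+1)(a+2)p}{6c(c+1)(c+2)}$, $u_5=\frac{a(a+1)p^3}{12c(c+1)}+\frac{a(a+1)(a+2)(a+3)p}{24c(c+1)(c+2)(c+3)}+\frac{p^5}{120}$, and for all integers $n\ge5$, \[ u_{n+1}=\sum_{i=0}^5\beta_i(n)u_{n-i}, \] where, with $D(n)=(c-2)c\,n(n+1)(c+n-1)(c+n)$, \[ \beta_0(n)=\frac{2\left(a\left(c^2-2cn+c-2(n-2)^2\right)+c(n-1)(2c+n-5)\right)}{(c-2)c(n+1)(c+n)}, \] \[ \beta_1(n)=\frac{1}{D(n)}\Big[(n-4)(n-3)(n-2)(n-1)(4p^2-1)+2(n-3)(n-2)(n-1)\big(4a+c(4p^2-3)\big) +(n-2)(n-1)\big(8a^2+a(4c+6)+c(6(c-2)p^2-6c+1)\big) +2(n-1)\big(a^2(4c-2)-3a(c-1)c+(c-2)c(c+1)p^2\big) +(c-2)\big(-a^2(c+2)+ac+c^2(c+1)p^2\big)\Big], \] \[ \beta_2(n)=\frac{1}{D(n)}\Big[2p^2(c-3)\big(a(3c+8)-2c^2+c-32\big)+2p^2\big(n(10a+c(31-3c)-104)-6(c-6)n^2-4n^3\big)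 -2(a+n-3)\big(2a^2-a(c-2n+3)-(n-2)(2c+n-4)\big)\Big], \] \[ \beta_3(n)=-\frac{1}{D(n)}\Big[p^2\big(-12a^2+2a(6c+5)-6c^2+c\big)+2(n-3)\big(a+c(4p^2-3)p^2\big) +(a-1)a+5(c-2)cp^4+(n-4)(n-3)(8p^4-6p^2+1)\Big], \] \[ \beta_4(n)=\frac{2p^2\left(p^2(-6a+5c+4(n-4))+3a-2c-n+4\right)}{D(n)},\qquad \beta_5(n)=\frac{4p^6-5p^4+p^2}{D(n)}. \]
   Context: For $a\in\mathbb{C}$, $(a)_n=a(a+1)\cdots(a+n-1)$ denotes the Pochhammer symbol, with $(a)_0=1$. For $a,c\in\mathbb{C}$ with $-c\notin\mathbb{N}\cup\{0\}$, the confluent hypergeometric (Kummer) function is $M(a,c;z)=\sum_{n=0}^\infty \frac{(a)_n}{(c)_n\,n!}z^n$, $z\in\mathbb{C}$. *)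

theory Defs
  imports "HOL-Analysis.Analysis"
begin

definition kummerM :: "complex \<Rightarrow> complex \<Rightarrow> complex \<Rightarrow> complex" where
  "kummerM a c z = (\<Sum>n. pochhammer a n / (pochhammer c n * fact n) * z ^ n)"

definition Dn :: "complex \<Rightarrow> complex \<Rightarrow> complex" where
  "Dn c n = (c - 2) * c * n * (n + 1) * (c + n - 1) * (c + n)"

definition beta0 :: "complex \<Rightarrow> complex \<Rightarrow> complex \<Rightarrow> complex \<Rightarrow> complex" where
  "beta0 a c p n = 2 * (a * (c^2 - 2*c*n + c - 2*(n - 2)^2) + c*(n - 1)*(2*c + n - 5))
      / ((c - 2) * c * (n + 1) * (c + n))"

definition beta1 :: "complex \<Rightarrow> complex \<Rightarrow> complex \<Rightarrow> complex \<Rightarrow> complex" where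
  "beta1 a c p n = ((n - 4)*(n - 3)*(n - 2)*(n - 1)*(4*p^2 - 1)
      + 2*(n - 3)*(n - 2)*(n - 1)*(4*a + c*(4*p^2 - 3))
      + (n - 2)*(n - 1)*(8*a^2 + a*(4*c + 6) + c*(6*(c - 2)*p^2 - 6*c + 1))
      + 2*(n - 1)*(a^2*(4*c - 2) - 3*a*(c - 1)*c + (c - 2)*c*(c + 1)*p^2)
      + (c - 2)*(- (a^2*(c + 2)) + a*c + c^2*(c + 1)*p^2)) / Dn c n"

definition beta2 :: "complex \<Rightarrow> complex \<Rightarrow> complex \<Rightarrow> complex \<Rightarrow> complex" where
  "beta2 a c p n = (2*p^2*(c - 3)*(a*(3*c + 8) - 2*c^2 + c - 32)
      + 2*p^2*(n*(10*a + c*(31 - 3*c) - 104) - 6*(c - 6)*n^2 - 4*n^3)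
      - 2*(a + n - 3)*(2*a^2 - a*(c - 2*n + 3) - (n - 2)*(2*c + n - 4))) / Dn c n"

definition beta3 :: "complex \<Rightarrow> complex \<Rightarrow> complex \<Rightarrow> complex \<Rightarrow> complex" where
  "beta3 a c p n = - ((p^2*(-12*a^2 + 2*a*(6*c + 5) - 6*c^2 + c)
      + 2*(n - 3)*(a + c*(4*p^2 - 3)*p^2)
      + (a - 1)*a + 5*(c - 2)*c*p^4 + (n - 4)*(n - 3)*(8*p^4 - 6*p^2 + 1)) / Dn c n)"

definition beta4 :: "complex \<Rightarrow> complex \<Rightarrow> complex \<Rightarrow> complex \<Rightarrow> complex" where
  "beta4 a c p n = 2*p^2*(p^2*(-6*a + 5*c + 4*(n - 4)) + 3*a - 2*c - n + 4) / Dn c n"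

definition beta5 :: "complex \<Rightarrow> complex \<Rightarrow> complex \<Rightarrow> complex \<Rightarrow> complex" where
  "beta5 a c p n = (4*p^6 - 5*p^4 + p^2) / Dn c n"

end

theory Submission
  imports Defs "HOL-Complex_Analysis.Complex_Analysis"
begin

definition mco :: "complex \<Rightarrow> complex \<Rightarrow> nat \<Rightarrow> complex" where
  "mco a c n = pochhammer a n / (pochhammer c n * fact n)"

lemma poch_nz:
  assumes "\<forall>k::nat. c \<noteq> - of_nat k"
  shows "pochhammer c n \<noteq> (0::complex)"
  using assms by (auto simp: pochhammer_eq_0_iff)

lemma cn_nz:
  assumes "\<forall>k::nat. c \<noteq> - of_nat k"
  shows "c + of_nat n \<noteq> (0::complex)"
proof
  assume "c + of_nat n = 0"
  then have "c = - of_nat n" by (simp add: eq_neg_iff_add_eq_0)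
  with assms show False by blast
qed

lemma mco_Suc:
  assumes "\<forall>k::nat. c \<noteq> - of_nat k"
  shows "mco a c (Suc n) = (a + of_nat n) * mco a c n / ((c + of_nat n) * (of_nat n + 1))"
  using poch_nz[OF assms, of n] cn_nz[OF assms, of n]
  unfolding mco_def by (simp add: pochhammer_rec' field_simps)

lemma mco_summable:
  assumes hc: "\<forall>k::nat. c \<noteq> - of_nat k"
  shows "summable (\<lambda>n. mco a c n * z ^ n)"
proof (rule summable_ratio_test[of "1/2" "nat \<lceil>2 * norm c + norm a + 8 * norm z\<rceil> + 1"])
  fix n assume hn: "nat \<lceil>2 * norm c + norm a + 8 * norm z\<rceil> + 1 \<le> n"
  then have hn': "2 * norm c + norm a + 8 * norm z + 1 \<le> real n"
    by linarith
  have h1: "norm (a + of_nat n) \<le> 2 * real n"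
  proof -
    have "norm (a + of_nat n) \<le> norm a + norm (of_nat n :: complex)" by (rule norm_triangle_ineq)
    also have "\<dots> = norm a + real n" by simp
    finally show ?thesis using hn' norm_ge_zero[of c] norm_ge_zero[of z] by linarith
  qed
  have h2: "norm (c + of_nat n) \<ge> real n / 2"
  proof -
    have "norm (of_nat n :: complex) \<le> norm (c + of_nat n) + norm c"
      using norm_triangle_ineq4[of "c + of_nat n" c] by simp
    then have "real n \<le> norm (c + of_nat n) + norm c" by simp
    then show ?thesis using hn' norm_ge_zero[of a] norm_ge_zero[of z] by linarith
  qed
  have h3: "8 * norm z \<le> real n + 1" using hn' norm_ge_zero[of a] norm_ge_zero[of c] by linarith
  have key: "norm (a + of_nat n) * norm z \<le> 1/2 * (norm (c + of_nat n) * (real n + 1))"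
  proof -
    have "norm (a + of_nat n) * norm z \<le> 2 * real n * norm z"
      by (intro mult_right_mono h1) simp
    also have "\<dots> \<le> real n * (real n + 1) / 4"
    proof -
      have "real n * (8 * norm z) \<le> real n * (real n + 1)"
        using h3 by (intro mult_left_mono) simp_all
      then show ?thesis by simp
    qed
    also have "\<dots> \<le> 1/2 * (norm (c + of_nat n) * (real n + 1))"
      using h2 by (simp add: mult_right_mono)
    finally show ?thesis .
  qed
  have nz: "norm ((c + of_nat n) * (of_nat n + 1)) = norm (c + of_nat n) * (real n + 1)"
    by (simp add: norm_mult) (metis norm_of_nat of_nat_Suc add.commute)
  have pos: "norm ((c + of_nat n) * (of_nat n + 1)) > 0"
    unfolding nz using cn_nz[OF hc, of n] by (intro mult_pos_pos) simp_all
  have "norm (mco a c (Suc n) * z ^ Suc n)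
      = norm (a + of_nat n) * norm z / norm ((c + of_nat n) * (of_nat n + 1)) * norm (mco a c n * z ^ n)"
  proof -
    have "mco a c (Suc n) * z ^ Suc n = ((a + of_nat n) * z / ((c + of_nat n) * (of_nat n + 1))) * (mco a c n * z ^ n)"
      unfolding mco_Suc[OF hc] by (simp add: algebra_simps)
    then show ?thesis by (simp only: norm_mult norm_divide)
  qed
  also have "\<dots> \<le> 1/2 * norm (mco a c n * z ^ n)"
    using key pos nz
    by (intro mult_right_mono) (simp_all add: divide_le_eq)
  finally show "norm (mco a c (Suc n) * z ^ Suc n) \<le> 1/2 * norm (mco a c n * z ^ n)" .
qed simp

lemma ode_M:
  fixes a c :: complex
  assumes hc: "\<forall>k::nat. c \<noteq> - of_nat k"
  defines "M \<equiv> Abs_fps (mco a c)"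
  shows "fps_X * fps_deriv (fps_deriv M) + fps_const c * fps_deriv M - fps_X * fps_deriv M - fps_const a * M = 0"
proof (rule fps_ext)
  fix n
  show "(fps_X * fps_deriv (fps_deriv M) + fps_const c * fps_deriv M - fps_X * fps_deriv M - fps_const a * M) $ n = 0 $ n"
  proof (cases n)
    case 0
    then show ?thesis using cn_nz[OF hc, of 0]
      by (simp add: M_def mco_Suc[OF hc] mco_def)
  next
    case (Suc k)
    have e: "mco a c (Suc (Suc k)) = (a + of_nat (Suc k)) * mco a c (Suc k) / ((c + of_nat (Suc k)) * (of_nat (Suc k) + 1))"
      by (rule mco_Suc[OF hc])
    have nz2: "(of_nat (Suc k) + 1 :: complex) \<noteq> 0"
    proof -
      have "(of_nat (Suc k) + 1 :: complex) = of_nat (Suc (Suc k))" by simp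
      also have "\<dots> \<noteq> 0" by (rule of_nat_neq_0)
      finally show ?thesis .
    qed
    have nz: "(c + of_nat (Suc k)) * (of_nat (Suc k) + 1) \<noteq> 0"
      using cn_nz[OF hc, of "Suc k"] nz2 by (simp del: of_nat_Suc)
    show ?thesis using Suc e nz nz2
      by (simp add: M_def field_simps del: of_nat_Suc) (simp add: algebra_simps)
  qed
qed

lemma ode_G:
  fixes a c q :: complex
  assumes hc: "\<forall>k::nat. c \<noteq> - of_nat k"
  defines "M \<equiv> Abs_fps (mco a c)"
  defines "G \<equiv> fps_exp q * M"
  shows "fps_X * fps_deriv (fps_deriv G) + fps_const c * fps_deriv G
     - fps_const (2*q+1) * (fps_X * fps_deriv G) + fps_const (q*(q+1)) * (fps_X * G) - fps_const (q*c+a) * G = 0"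
proof -
  define E where "E = fps_exp q"
  define K where "K = fps_const q"
  define C where "C = fps_const c"
  define A where "A = fps_const a"
  have dE: "fps_deriv E = K * E" by (simp add: E_def K_def)
  have d1: "fps_deriv G = K * E * M + E * fps_deriv M"
    unfolding G_def E_def[symmetric] by (simp add: dE algebra_simps)
  have d2: "fps_deriv (fps_deriv G) = K * K * E * M + 2 * K * E * fps_deriv M + E * fps_deriv (fps_deriv M)"
    unfolding d1 by (simp add: dE algebra_simps K_def)
  have c1: "fps_const (2*q+1) = 2 * K + 1" by (simp add: K_def)
  have c2: "fps_const (q*(q+1)) = K * K + K" by (simp add: K_def algebra_simps)
  have c3: "fps_const (q*c+a) = K * C + A" by (simp add: K_def C_def A_def)
  have o: "fps_X * fps_deriv (fps_deriv M) + C * fps_deriv M - fps_X * fps_deriv M - A * M = 0"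
    using ode_M[OF hc, of a] unfolding M_def C_def A_def .
  have "fps_X * fps_deriv (fps_deriv G) + fps_const c * fps_deriv G
     - fps_const (2*q+1) * (fps_X * fps_deriv G) + fps_const (q*(q+1)) * (fps_X * G) - fps_const (q*c+a) * G
     = E * (fps_X * fps_deriv (fps_deriv M) + C * fps_deriv M - fps_X * fps_deriv M - A * M)"
    unfolding d2 unfolding d1 unfolding c1 c2 c3 C_def[symmetric] A_def[symmetric] G_def E_def[symmetric] by algebra
  then show ?thesis using o by simp
qed

lemma grec:
  fixes a c q :: complex
  assumes hc: "\<forall>k::nat. c \<noteq> - of_nat k"
  shows "(of_nat k + 1) * (of_nat k + c) * fps_nth (fps_exp q * Abs_fps (mco a c)) (Suc k)
     = ((2*q+1) * of_nat k + q*c + a) * fps_nth (fps_exp q * Abs_fps (mco a c)) k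
       - q*(q+1) * (if k = 0 then 0 else fps_nth (fps_exp q * Abs_fps (mco a c)) (k - 1))"
proof -
  define G where "G = fps_exp q * Abs_fps (mco a c)"
  have "fps_X * fps_deriv (fps_deriv G) + fps_const c * fps_deriv G
     - fps_const (2*q+1) * (fps_X * fps_deriv G) + fps_const (q*(q+1)) * (fps_X * G) - fps_const (q*c+a) * G = 0"
    using ode_G[OF hc, where a=a and q=q] by (simp only: G_def)
  then have "fps_nth (fps_X * fps_deriv (fps_deriv G) + fps_const c * fps_deriv G
     - fps_const (2*q+1) * (fps_X * fps_deriv G) + fps_const (q*(q+1)) * (fps_X * G) - fps_const (q*c+a) * G) k = 0"
    by simp
  then have "(if k = 0 then 0 else of_nat k * (of_nat k + 1) * fps_nth G (Suc k))
     + c * ((of_nat k + 1) * fps_nth G (Suc k))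
     - (2*q+1) * (if k = 0 then 0 else of_nat k * fps_nth G k)
     + q*(q+1) * (if k = 0 then 0 else fps_nth G (k - 1)) - (q*c+a) * fps_nth G k = 0"
    by (cases k) (simp_all add: algebra_simps)
  then show ?thesis unfolding G_def[symmetric]
    by (cases k) (simp_all add: algebra_simps)
qed

lemma cert:
  fixes x a c q G0 G1 G2 G3 G4 G5 G6 :: complex
  shows "Dn c x * G0 - ((2 * (a * (c^2 - 2*c*x + c - 2*(x - 2)^2) + c*(x - 1)*(2*c + x - 5)) * x * (c + x - 1)) * G1
    + ((x - 4)*(x - 3)*(x - 2)*(x - 1)*(4*q^2 - 1)
      + 2*(x - 3)*(x - 2)*(x - 1)*(4*a + c*(4*q^2 - 3))
      + (x - 2)*(x - 1)*(8*a^2 + a*(4*c + 6) + c*(6*(c - 2)*q^2 - 6*c + 1))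
      + 2*(x - 1)*(a^2*(4*c - 2) - 3*a*(c - 1)*c + (c - 2)*c*(c + 1)*q^2)
      + (c - 2)*(- (a^2*(c + 2)) + a*c + c^2*(c + 1)*q^2)) * G2
    + (2*q^2*(c - 3)*(a*(3*c + 8) - 2*c^2 + c - 32)
      + 2*q^2*(x*(10*a + c*(31 - 3*c) - 104) - 6*(c - 6)*x^2 - 4*x^3)
      - 2*(a + x - 3)*(2*a^2 - a*(c - 2*x + 3) - (x - 2)*(2*c + x - 4))) * G3
    + (- (q^2*(-12*a^2 + 2*a*(6*c + 5) - 6*c^2 + c)
      + 2*(x - 3)*(a + c*(4*q^2 - 3)*q^2)
      + (a - 1)*a + 5*(c - 2)*c*q^4 + (x - 4)*(x - 3)*(8*q^4 - 6*q^2 + 1))) * G4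
    + (2*q^2*(q^2*(-6*a + 5*c + 4*(x - 4)) + 3*a - 2*c - x + 4)) * G5
    + (4*q^6 - 5*q^4 + q^2) * G6)
   = (x^2*c^2 - 2*x^2*c + x*c^3 - 3*x*c^2 + 2*x*c) * ((x+1)*(x+c)*G0 - ((2*q+1)*x + q*c + a)*G1 + q*(q+1)*G2)
   + (4*x^2*a - 2*x^2*c + 4*x*a*c - 16*x*a + 2*x*c^2*q - 3*x*c^2 - 4*x*c*q + 10*x*c - a*c^2 - 4*a*c + 16*a + c^3*q - 2*c^2*q + 4*c^2 - 10*c)
       * (x*(x - 1 + c)*G1 - ((2*q+1)*(x - 1) + q*c + a)*G2 + q*(q+1)*G3)
   + (- 4*x^2*q^2 + x^2 + 8*x*a*q - 4*x*a - 4*x*c*q^2 - 4*x*c*q + 3*x*c + 28*x*q^2 - 7*x - 4*a^2 + 4*a*c*q + 2*a*c - 16*a*q + 10*a + c^2*q^2 - 3*c^2*q + 10*c*q^2 + 10*c*q - 8*c - 48*q^2 + 12)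
       * ((x - 1)*(x - 2 + c)*G2 - ((2*q+1)*(x - 2) + q*c + a)*G3 + q*(q+1)*G4)
   + (- 8*x*q^3 + 4*x*q^2 + 2*x*q - x + 8*a*q^2 - 4*a*q - a - 4*c*q^3 - 2*c*q^2 + 3*c*q + 32*q^3 - 16*q^2 - 8*q + 4)
       * ((x - 2)*(x - 3 + c)*G3 - ((2*q+1)*(x - 3) + q*c + a)*G4 + q*(q+1)*G5)
   + (- 4*q^4 + 4*q^3 + q^2 - q)
       * ((x - 3)*(x - 4 + c)*G4 - ((2*q+1)*(x - 4) + q*c + a)*G5 + q*(q+1)*G6)"
  unfolding Dn_def by algebra

lemma cancel6:
  fixes D G0 G1 G2 G3 G4 G5 G6 b0 b1 b2 b3 b4 b5 P0 P1 P2 P3 P4 P5 :: complex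
  assumes "D \<noteq> 0" "D * b0 = P0" "D * b1 = P1" "D * b2 = P2" "D * b3 = P3" "D * b4 = P4" "D * b5 = P5"
    and "D * G0 - (P0 * G1 + P1 * G2 + P2 * G3 + P3 * G4 + P4 * G5 + P5 * G6) = 0"
  shows "G0 = b0 * G1 + b1 * G2 + b2 * G3 + b3 * G4 + b4 * G5 + b5 * G6"
proof -
  have "D * G0 - (D * b0 * G1 + D * b1 * G2 + D * b2 * G3 + D * b3 * G4 + D * b4 * G5 + D * b5 * G6) = 0"
    using assms(8) unfolding assms(2-7)[symmetric] by (simp only: mult.assoc)
  then have "D * G0 = D * (b0 * G1 + b1 * G2 + b2 * G3 + b3 * G4 + b4 * G5 + b5 * G6)"
    by algebra
  then show ?thesis using assms(1) by simp
qed

lemma Lrec: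
  fixes a c q :: complex and G :: "nat \<Rightarrow> complex"
  assumes hc: "\<forall>k::nat. c \<noteq> - of_nat k" and hc2: "c \<noteq> 2"
    and rec: "\<And>k. k \<ge> 1 \<Longrightarrow> (of_nat k + 1) * (of_nat k + c) * G (Suc k)
        = ((2*q+1) * of_nat k + q*c + a) * G k - q*(q+1) * G (k - 1)"
    and n: "n \<ge> 5"
  shows "G (n + 1) = beta0 a c q (of_nat n) * G n + beta1 a c q (of_nat n) * G (n - 1)
             + beta2 a c q (of_nat n) * G (n - 2) + beta3 a c q (of_nat n) * G (n - 3)
             + beta4 a c q (of_nat n) * G (n - 4) + beta5 a c q (of_nat n) * G (n - 5)"
proof -
  obtain m where m: "n = m + 5" using n by (metis add.commute le_Suc_ex)
  define x where "x = (of_nat n :: complex)"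
  have x: "x = of_nat m + 5" unfolding x_def m by simp
  have R0: "(x+1)*(x+c)*G (m+6) - ((2*q+1)*x + q*c + a)*G (m+5) + q*(q+1)*G (m+4) = 0"
    using rec[of "m+5"] unfolding x by (simp add: algebra_simps eval_nat_numeral)
  have R1: "x*(x - 1 + c)*G (m+5) - ((2*q+1)*(x - 1) + q*c + a)*G (m+4) + q*(q+1)*G (m+3) = 0"
    using rec[of "m+4"] unfolding x by (simp add: algebra_simps eval_nat_numeral)
  have R2: "(x - 1)*(x - 2 + c)*G (m+4) - ((2*q+1)*(x - 2) + q*c + a)*G (m+3) + q*(q+1)*G (m+2) = 0"
    using rec[of "m+3"] unfolding x by (simp add: algebra_simps eval_nat_numeral)
  have R3: "(x - 2)*(x - 3 + c)*G (m+3) - ((2*q+1)*(x - 3) + q*c + a)*G (m+2) + q*(q+1)*G (m+1) = 0"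
    using rec[of "m+2"] unfolding x by (simp add: algebra_simps eval_nat_numeral)
  have R4: "(x - 3)*(x - 4 + c)*G (m+2) - ((2*q+1)*(x - 4) + q*c + a)*G (m+1) + q*(q+1)*G m = 0"
    using rec[of "m+1"] unfolding x by (simp add: algebra_simps eval_nat_numeral)
  have c0: "c \<noteq> 0" using hc by (metis minus_zero of_nat_0)
  have nzx: "x \<noteq> 0" unfolding x_def using n by simp
  have nzx1: "x + 1 \<noteq> 0" unfolding x_def by (metis of_nat_Suc of_nat_neq_0 add.commute)
  have nzcx: "c + x \<noteq> 0" unfolding x_def by (rule cn_nz[OF hc])
  have nzcx1: "c + x - 1 \<noteq> 0"
  proof -
    have e: "c + x - 1 = c + of_nat (n - 1)" unfolding x_def using n by (simp add: of_nat_diff)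
    show ?thesis by (subst e) (rule cn_nz[OF hc])
  qed
  have c2: "c - 2 \<noteq> 0" using hc2 by simp
  have D: "Dn c x \<noteq> 0" unfolding Dn_def using c0 nzx nzx1 nzcx nzcx1 c2 by simp
  have E0: "Dn c x * beta0 a c q x = (2 * (a * (c^2 - 2*c*x + c - 2*(x - 2)^2) + c*(x - 1)*(2*c + x - 5)) * x * (c + x - 1))"
  proof -
    define N where "N = (2 * (a * (c^2 - 2*c*x + c - 2*(x - 2)^2) + c*(x - 1)*(2*c + x - 5)))"
    define Q where "Q = (c - 2) * c * (x + 1) * (c + x)"
    have Q: "Q \<noteq> 0" unfolding Q_def using c0 nzx1 nzcx c2 by simp
    have e1: "Dn c x = Q * (x * (c + x - 1))" unfolding Dn_def Q_def by algebra
    have e2: "beta0 a c q x = N / Q" unfolding beta0_def N_def Q_def by (rule refl)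
    have "Dn c x * beta0 a c q x = N * (x * (c + x - 1))" unfolding e1 e2 using Q by simp
    then show ?thesis unfolding N_def by (simp only: mult.assoc)
  qed
  have "G (m+6) = beta0 a c q x * G (m+5) + beta1 a c q x * G (m+4) + beta2 a c q x * G (m+3)
      + beta3 a c q x * G (m+2) + beta4 a c q x * G (m+1) + beta5 a c q x * G m"
    apply (rule cancel6[OF D E0 _ _ _ _ _ trans[OF cert[where q=q and a=a and c=c and x=x]]])
    subgoal using D by (simp add: beta1_def)
    subgoal using D by (simp add: beta2_def)
    subgoal using D by (simp add: beta3_def)
    subgoal using D by (simp add: beta4_def)
    subgoal using D by (simp add: beta5_def)
    subgoal by (simp only: R0 R1 R2 R3 R4 mult_zero_right add_0_right)
    done
  then show ?thesis unfolding x_def m by (simp add: eval_nat_numeral)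
qed

lemma beta_neg:
  "beta0 a c (-p) x = beta0 a c p x" "beta1 a c (-p) x = beta1 a c p x"
  "beta2 a c (-p) x = beta2 a c p x" "beta3 a c (-p) x = beta3 a c p x"
  "beta4 a c (-p) x = beta4 a c p x" "beta5 a c (-p) x = beta5 a c p x"
  by (simp_all add: beta0_def beta1_def beta2_def beta3_def beta4_def beta5_def)

lemma u_fps:
  fixes a c p :: complex and u :: "nat \<Rightarrow> complex"
  assumes hc: "\<forall>k::nat. c \<noteq> - of_nat k"
    and hu: "\<forall>z::complex. (\<lambda>n. u n * z ^ n) sums (sinh (p * z) * kummerM a c z)"
  shows "Abs_fps u = fps_const (1/2) * (fps_exp p - fps_exp (-p)) * Abs_fps (mco a c)"
proof -
  define M where "M = Abs_fps (mco a c)"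
  have rM: "fps_conv_radius M = \<infinity>"
    unfolding fps_conv_radius_def M_def
    by (rule conv_radius_inftyI'') (simp add: mco_summable[OF hc])
  have eM: "kummerM a c has_fps_expansion M"
    unfolding has_fps_expansion_def
  proof
    show "0 < fps_conv_radius M" using rM by simp
    show "\<forall>\<^sub>F z in nhds 0. eval_fps M z = kummerM a c z"
      by (intro always_eventually allI) (simp add: eval_fps_def kummerM_def M_def mco_def)
  qed
  have sh: "(\<lambda>z. sinh (p * z)) = (\<lambda>z. (1/2) * (exp (p * z) - exp ((-p) * z)))"
    by (rule ext) (simp add: sinh_def scaleR_conv_of_real field_simps)
  have eS: "(\<lambda>z. sinh (p * z)) has_fps_expansion fps_const (1/2) * (fps_exp p - fps_exp (-p))"
    unfolding sh by (intro has_fps_expansion_cmult_left has_fps_expansion_diff has_fps_expansion_exp)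
  have ef: "(\<lambda>z. sinh (p * z) * kummerM a c z) has_fps_expansion fps_const (1/2) * (fps_exp p - fps_exp (-p)) * M"
    by (rule has_fps_expansion_mult[OF eS eM])
  have rU: "fps_conv_radius (Abs_fps u) = \<infinity>"
    unfolding fps_conv_radius_def
    by (rule conv_radius_inftyI'') (use hu sums_summable in auto)
  have eU: "(\<lambda>z. sinh (p * z) * kummerM a c z) has_fps_expansion Abs_fps u"
    unfolding has_fps_expansion_def
  proof
    show "0 < fps_conv_radius (Abs_fps u)" using rU by simp
    show "\<forall>\<^sub>F z in nhds 0. eval_fps (Abs_fps u) z = sinh (p * z) * kummerM a c z"
      by (intro always_eventually allI) (simp add: eval_fps_def sums_unique[OF hu[rule_format], symmetric])
  qed
  show ?thesis using fps_expansion_unique_complex[OF eU ef] unfolding M_def .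
qed

lemma init_vals:
  fixes a c p :: complex and u :: "nat \<Rightarrow> complex"
  assumes hc: "\<forall>k::nat. c \<noteq> - of_nat k"
    and U: "Abs_fps u = fps_const (1/2) * (fps_exp p - fps_exp (-p)) * Abs_fps (mco a c)"
  shows "u 0 = 0 \<and>
    u 1 = p \<and>
    u 2 = a * p / c \<and>
    u 3 = a*(a + 1)*p / (2*c*(c + 1)) + p^3 / 6 \<and>
    u 4 = a*p^3 / (6*c) + a*(a + 1)*(a + 2)*p / (6*c*(c + 1)*(c + 2)) \<and>
    u 5 = a*(a + 1)*p^3 / (12*c*(c + 1))
             + a*(a + 1)*(a + 2)*(a + 3)*p / (24*c*(c + 1)*(c + 2)*(c + 3)) + p^5 / 120"
proof -
  have uk: "u k = (\<Sum>i=0..k. (1/2) * (p^i / fact i - (-p)^i / fact i) * mco a c (k - i))" for k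
  proof -
    have "u k = fps_nth (Abs_fps u) k" by simp
    also have "\<dots> = (\<Sum>i=0..k. (1/2) * (p^i / fact i - (-p)^i / fact i) * mco a c (k - i))"
      unfolding U fps_mult_nth[of "fps_const (1/2) * (fps_exp p - fps_exp (-p))"]
      by (simp add: algebra_simps)
    finally show ?thesis .
  qed
  have c0: "c \<noteq> 0" using cn_nz[OF hc, of 0] by simp
  have c1: "c + 1 \<noteq> 0" using cn_nz[OF hc, of 1] by simp
  have c2: "c + 2 \<noteq> 0" using cn_nz[OF hc, of 2] by simp
  have c3: "c + 3 \<noteq> 0" using cn_nz[OF hc, of 3] by simp
  have m0: "mco a c 0 = 1" by (simp add: mco_def)
  have m1: "mco a c (Suc 0) = a / c" by (simp add: mco_def)
  have m2: "mco a c (Suc (Suc 0)) = a*(a+1) / (2*c*(c+1))"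
    by (simp add: mco_def pochhammer_Suc)
  have m3: "mco a c (Suc (Suc (Suc 0))) = a*(a+1)*(a+2) / (6*c*(c+1)*(c+2))"
    by (simp add: mco_def pochhammer_Suc field_simps)
  have m4: "mco a c (Suc (Suc (Suc (Suc 0)))) = a*(a+1)*(a+2)*(a+3) / (24*c*(c+1)*(c+2)*(c+3))"
    by (simp add: mco_def pochhammer_Suc field_simps)
  have u0: "u 0 = 0" by (simp add: uk)
  have u1: "u 1 = p" by (simp add: uk m0)
  have u2: "u 2 = p * mco a c (Suc 0)" by (simp add: uk eval_nat_numeral)
  have u3: "u 3 = p * mco a c (Suc (Suc 0)) + p^3 / 6 * mco a c 0"
    by (simp add: uk eval_nat_numeral)
  have u4: "u 4 = p * mco a c (Suc (Suc (Suc 0))) + p^3 / 6 * mco a c (Suc 0)"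
    by (simp add: uk eval_nat_numeral)
  have u5: "u 5 = p * mco a c (Suc (Suc (Suc (Suc 0)))) + p^3 / 6 * mco a c (Suc (Suc 0)) + p^5/120 * mco a c 0"
    by (simp add: uk eval_nat_numeral)
  show ?thesis
    unfolding u0 u1 u2 u3 u4 u5 m0 m1 m2 m3 m4
    by (simp add: field_simps)
qed

theorem theorem2p9:
  fixes a c p :: complex and u :: "nat \<Rightarrow> complex"
  assumes hc: "\<forall>k::nat. c \<noteq> - of_nat k"
    and hc2: "c \<noteq> 2"
    and hu: "\<forall>z::complex. (\<lambda>n. u n * z ^ n) sums (sinh (p * z) * kummerM a c z)"
  shows "u 0 = 0 \<and>
    u 1 = p \<and>
    u 2 = a * p / c \<and>
    u 3 = a*(a + 1)*p / (2*c*(c + 1)) + p^3 / 6 \<and>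
    u 4 = a*p^3 / (6*c) + a*(a + 1)*(a + 2)*p / (6*c*(c + 1)*(c + 2)) \<and>
    u 5 = a*(a + 1)*p^3 / (12*c*(c + 1))
             + a*(a + 1)*(a + 2)*(a + 3)*p / (24*c*(c + 1)*(c + 2)*(c + 3)) + p^5 / 120 \<and>
    (\<forall>n::nat. n \<ge> 5 \<longrightarrow>
           u (n + 1) = beta0 a c p (of_nat n) * u n + beta1 a c p (of_nat n) * u (n - 1)
             + beta2 a c p (of_nat n) * u (n - 2) + beta3 a c p (of_nat n) * u (n - 3)
             + beta4 a c p (of_nat n) * u (n - 4) + beta5 a c p (of_nat n) * u (n - 5))"
proof -
  have U: "Abs_fps u = fps_const (1/2) * (fps_exp p - fps_exp (-p)) * Abs_fps (mco a c)"
    by (rule u_fps[OF hc hu])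
  have iv: "u 0 = 0 \<and>
    u 1 = p \<and>
    u 2 = a * p / c \<and>
    u 3 = a*(a + 1)*p / (2*c*(c + 1)) + p^3 / 6 \<and>
    u 4 = a*p^3 / (6*c) + a*(a + 1)*(a + 2)*p / (6*c*(c + 1)*(c + 2)) \<and>
    u 5 = a*(a + 1)*p^3 / (12*c*(c + 1))
             + a*(a + 1)*(a + 2)*(a + 3)*p / (24*c*(c + 1)*(c + 2)*(c + 3)) + p^5 / 120"
    by (rule init_vals[OF hc U])
  define g where "g q k = fps_nth (fps_exp q * Abs_fps (mco a c)) k" for q k
  have ug: "u k = (g p k - g (-p) k) / 2" for k
  proof -
    have e: "fps_const (1/2) * (fps_exp p - fps_exp (-p)) * Abs_fps (mco a c)
       = fps_const (1/2) * (fps_exp p * Abs_fps (mco a c) - fps_exp (-p) * Abs_fps (mco a c))"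
      by (simp add: algebra_simps)
    have "u k = fps_nth (Abs_fps u) k" by simp
    also have "\<dots> = (g p k - g (-p) k) / 2" unfolding U e g_def by simp
    finally show ?thesis .
  qed
  have Lq: "g q (n + 1) = beta0 a c q (of_nat n) * g q n + beta1 a c q (of_nat n) * g q (n - 1)
             + beta2 a c q (of_nat n) * g q (n - 2) + beta3 a c q (of_nat n) * g q (n - 3)
             + beta4 a c q (of_nat n) * g q (n - 4) + beta5 a c q (of_nat n) * g q (n - 5)"
    if "n \<ge> 5" for q n
  proof (rule Lrec[OF hc hc2 _ that])
    fix k :: nat assume "k \<ge> 1"
    then show "(of_nat k + 1) * (of_nat k + c) * g q (Suc k)
        = ((2*q+1) * of_nat k + q*c + a) * g q k - q*(q+1) * g q (k - 1)"
      using grec[OF hc, of k q a] unfolding g_def by simp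
  qed
  have rec: "u (n + 1) = beta0 a c p (of_nat n) * u n + beta1 a c p (of_nat n) * u (n - 1)
             + beta2 a c p (of_nat n) * u (n - 2) + beta3 a c p (of_nat n) * u (n - 3)
             + beta4 a c p (of_nat n) * u (n - 4) + beta5 a c p (of_nat n) * u (n - 5)"
    if "n \<ge> 5" for n
    unfolding ug Lq[OF that, of p] Lq[OF that, of "-p"] beta_neg
    by (simp add: field_simps)
  show ?thesis using iv rec by blast
qed

end
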